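(* Let $a,b\in\mathbb{R}$ and $\theta\in\mathbb{R}$ with $\cos\theta\ne0$. If $w\in\mathbb{C}\setminus\mathbb{R}$ is a zero of $f^*(\cdot,\theta)$ with $|w|<1$, then, setting $\zeta=1/w$ and $\tau=-\frac{1}{\zeta}-2\cos\theta$, we have $\zeta\tau^3\notin\mathbb{R}$.
   Context: $f^*(\zeta,\theta)=(\zeta+2\cos\theta)(2\zeta\cos\theta+1)+b\zeta-a(\zeta+2\cos\theta)^3$, viewed as a polynomial in complex $\zeta$. *)

theory Defs
  imports "HOL-Analysis.Analysis"
begin

definition fstar :: "real \<Rightarrow> real \<Rightarrow> complex \<Rightarrow> real \<Rightarrow> complex" where
  "fstar a b \<zeta> \<theta> =
     (\<zeta> + 2 * of_real (cos \<theta>)) * (2 * \<zeta> * of_real (cos \<theta>) + 1) + of_real b * \<zeta>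
     - of_real a * (\<zeta> + 2 * of_real (cos \<theta>)) ^ 3"

end

theory Submission
  imports Defs
begin

theorem mainTheorem20:
  fixes a b \<theta> :: real and w :: complex
  assumes "cos \<theta> \<noteq> 0"
    and "w \<notin> \<real>"
    and "fstar a b w \<theta> = 0"
    and "norm w < 1"
  shows "let \<zeta> = 1 / w; \<tau> = - (1 / \<zeta>) - 2 * of_real (cos \<theta>) in \<zeta> * \<tau> ^ 3 \<notin> \<real>"
proof -
  define c where "c = cos \<theta>"
  have w0: "w \<noteq> 0" using assms(2) by auto
  show ?thesis
  proof (simp only: Let_def, rule notI)
    assume "1 / w * (- (1 / (1 / w)) - 2 * complex_of_real (cos \<theta>)) ^ 3 \<in> \<real>"
    then obtain r where r: "1 / w * (- w - 2 * complex_of_real c) ^ 3 = of_real r"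
      by (auto simp: c_def elim!: Reals_cases)
    have u3: "(w + 2 * complex_of_real c) ^ 3 = - of_real r * w"
    proof -
      have "(- w - 2 * complex_of_real c) ^ 3 = of_real r * w"
        using r w0 by (simp add: field_simps)
      moreover have "(- w - 2 * complex_of_real c) ^ 3 = - ((w + 2 * complex_of_real c) ^ 3)"
        by (simp add: power3_eq_cube algebra_simps)
      ultimately show ?thesis by (metis minus_equation_iff mult_minus_left)
    qed
    have f: "(w + 2 * of_real c) * (2 * w * of_real c + 1) + of_real b * w
       - of_real a * (w + 2 * of_real c) ^ 3 = 0"
      using assms(3) by (simp add: fstar_def c_def)
    have E: "2 * of_real c * w^2 + of_real (1 + 4*c^2 + b + a*r) * w + 2 * of_real c = 0"
      using f unfolding u3 by (simp add: algebra_simps power2_eq_square)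
    obtain x y where wxy: "w = Complex x y" by (cases w)
    have y0: "y \<noteq> 0" using assms(2) wxy by (auto simp: complex_is_Real_iff)
    have re: "2*c*(x^2 - y^2) + (1 + 4*c^2 + b + a*r)*x + 2*c = 0"
      using arg_cong[OF E, of Re] wxy by (simp add: power2_eq_square)
    have im: "2*c*(2*x*y) + (1 + 4*c^2 + b + a*r)*y = 0"
      using arg_cong[OF E, of Im] wxy by (simp add: power2_eq_square)
    have s: "(1 + 4*c^2 + b + a*r) = -4*c*x"
    proof -
      have "(4*c*x + (1 + 4*c^2 + b + a*r))*y = 0" using im by (simp add: algebra_simps)
      thus ?thesis using y0 by simp
    qed
    have "2*c*(x^2 - y^2) + (-4*c*x)*x + 2*c = 0" using re s by simp
    hence "2*c*(1 - x^2 - y^2) = 0" proof -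
      have "2*c*(1 - x^2 - y^2) = 2*c*(x^2 - y^2) + (-4*c*x)*x + 2*c" by (simp add: power2_eq_square algebra_simps)
      thus ?thesis using \<open>2*c*(x^2 - y^2) + (-4*c*x)*x + 2*c = 0\<close> by simp
    qed
    hence "x^2 + y^2 = 1" using assms(1) c_def by simp
    moreover have "x^2 + y^2 < 1"
    proof -
      have "norm w ^ 2 < 1" using assms(4) by (simp add: power_less_one_iff norm_ge_zero abs_square_less_1)
      thus ?thesis using wxy by (simp add: cmod_def)
    qed
    ultimately show False by simp
  qed
qed

end
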